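(* In the setting below, there exists a unique $\tilde D\in\mathcal D_n^+$ satisfying $$\tilde D=\frac{\Lambda^{\bar C}(u^\tau(\tilde D))}{I_n+u^\tau(\tilde D)\Lambda^{\bar C}(u^\tau(\tilde D))}.$$
   Context: $\mathcal D_n^+$: $n\times n$ diagonal matrices with positive diagonal entries; operations on diagonal matrices are entrywise. $\gamma>0$ fixed. $u:(0,\infty)\to(0,\infty)$ is bounded by $u^\infty$, with $t\mapsto tu(t)$ non-decreasing and $t\mapsto u(t)/t$ non-increasing. Data: $x_i=\sqrt{\tau_i}z_i+m$ with $z_1,\ldots,z_n\in\mathbb R^p$ independent random vectors with $C_i=\mathbb E[z_iz_i^T]$ and $\inf_i\frac1n\operatorname{tr}C_i>0$, $\tau_i>0$ deterministic, $m\in\mathbb R^p$ deterministic. Let $\underline\tau=\mathrm{diag}(\max(\tau_i,1))$, $\bar\tau=\mathrm{diag}(\min(\tau_i,1))$, $\bar z_i=x_i/\sqrt{\underline\tau_i}$, $\bar C_i=\mathbb E[\bar z_i\bar z_i^T]$, $\bar C=(\bar C_1,\ldots,\bar C_n)$, and $u^\tau(\Delta)=\underline\tau\,u(\underline\tau\Delta)$. For nonnegative nonzero symmetric $S=(S_1,\ldots,S_n)$ and $\Delta\in\mathcal D_n^+$, $\Lambda^S(\Delta)\in\mathcal D_n^+$ is the unique solution of $\Lambda^S(\Delta)_i=\frac1n\operatorname{tr}\Big(S_i\big(\frac1n\sum_j\frac{\Delta_jS_j}{1+\Delta_j\Lambda^S(\Delta)_j}+\gamma I_p\big)^{-1}\Big)$.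 *)

theory Defs
  imports "HOL-Probability.Probability"
begin

text \<open>Diagonal matrices in D_n^+ are represented by the vector of their diagonal
entries (type real^'n, all entries positive); operations on them are entrywise.
Matrices are p x p real matrices real^'p^'p.\<close>

definition posdiag :: "real^'n \<Rightarrow> bool" where
  "posdiag d \<longleftrightarrow> (\<forall>i. d $ i > 0)"

definition outer :: "real^'p \<Rightarrow> real^'p^'p" where
  "outer v = (\<chi> a b. v $ a * v $ b)"

definition Lambda :: "real \<Rightarrow> ('n::finite \<Rightarrow> real^'p^'p) \<Rightarrow> real^'n \<Rightarrow> real^'n" where
  "Lambda \<gamma> S \<Delta> = (THE l. posdiag l \<and>
     (\<forall>i. l $ i = (1 / real CARD('n)) * trace (S i **
        matrix_inv ((1 / real CARD('n)) *\<^sub>R (\<Sum>j\<in>UNIV. (\<Delta> $ j / (1 + \<Delta> $ j * l $ j)) *\<^sub>R S j)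
                    + \<gamma> *\<^sub>R mat 1))))"

definition utau :: "(real \<Rightarrow> real) \<Rightarrow> ('n::finite \<Rightarrow> real) \<Rightarrow> real^'n \<Rightarrow> real^'n" where
  "utau u \<tau> \<Delta> = (\<chi> i. max (\<tau> i) 1 * u (max (\<tau> i) 1 * \<Delta> $ i))"

end

theory Submission
  imports Defs
begin


definition Q :: "real^'p^'p \<Rightarrow> real^'p \<Rightarrow> real" where
  "Q A x = x \<bullet> (A *v x)"

definition symm :: "real^'p^'p \<Rightarrow> bool" where
  "symm A \<longleftrightarrow> (\<forall>y z. y \<bullet> (A *v z) = z \<bullet> (A *v y))"

lemma bil_outer: "y \<bullet> (outer v *v z) = (v \<bullet> y) * (v \<bullet> z)"
  unfolding outer_def inner_vec_def matrix_vector_mult_def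
  apply (simp add: sum_distrib_left sum_distrib_right mult_ac)
  apply (subst sum.swap) apply (simp add: mult_ac)
  done

lemma trace_outer: "trace (outer v ** N) = v \<bullet> (N *v v)"
  unfolding outer_def trace_def inner_vec_def matrix_vector_mult_def matrix_matrix_mult_def
  apply (simp add: sum_distrib_left mult_ac)
  apply (subst sum.swap) apply (simp add: mult_ac)
  done

lemma trace_outer1: "trace (outer v) = v \<bullet> v"
  unfolding outer_def trace_def inner_vec_def by simp

lemma mv_add: "(A + B) *v x = A *v x + B *v (x::real^'p)"
  by (simp add: matrix_vector_mult_def vec_eq_iff algebra_simps sum.distrib)
lemma mv_scale: "(c *\<^sub>R A) *v x = c *\<^sub>R (A *v (x::real^'p))"
  by (simp add: matrix_vector_mult_def vec_eq_iff algebra_simps sum_distrib_left)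
lemma mv_sum: "finite I \<Longrightarrow> (\<Sum>j\<in>I. A j) *v x = (\<Sum>j\<in>I. A j *v (x::real^'p))"
  by (induct I rule: finite_induct) (simp_all add: mv_add)

lemma linear_bil: "linear (\<lambda>A::real^'p^'p. y \<bullet> (A *v z))"
  by (rule linearI) (simp_all add: mv_add mv_scale inner_add_right)

lemma trace_scale: "trace (c *\<^sub>R (A::real^'p^'p)) = c * trace A"
  by (simp add: trace_def sum_distrib_left)

lemma linear_trace_mul: "linear (\<lambda>A::real^'p^'p. trace (A ** N))"
proof (rule linearI)
  fix A B :: "real^'p^'p" and c :: real
  show "trace ((A + B) ** N) = trace (A ** N) + trace (B ** N)"
    by (simp add: trace_def matrix_matrix_mult_def sum.distrib algebra_simps)
  show "trace ((c *\<^sub>R A) ** N) = c *\<^sub>R trace (A ** N)"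
    by (simp add: trace_def matrix_matrix_mult_def sum_distrib_left algebra_simps)
qed

lemma linear_trace: "linear (trace :: real^'p^'p \<Rightarrow> real)"
  by (rule linearI) (simp_all add: trace_add trace_scale)

lemma Q_add: "Q (A + B) x = Q A x + Q B x"
  by (simp add: Q_def mv_add inner_add_right)
lemma Q_scale: "Q (c *\<^sub>R A) x = c * Q A x"
  by (simp add: Q_def mv_scale)
lemma Q_sum: "finite I \<Longrightarrow> Q (\<Sum>j\<in>I. A j) x = (\<Sum>j\<in>I. Q (A j) x)"
  by (induct I rule: finite_induct) (simp_all add: Q_add, simp add: Q_def)
lemma Q_id: "Q (mat 1) x = x \<bullet> x"
  by (simp add: Q_def)
lemma Q_vscale: "Q A (c *\<^sub>R x) = c^2 * Q A x"
  by (simp add: Q_def power2_eq_square matrix_vector_mult_def vec_eq_iff sum_distrib_left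
        inner_vec_def algebra_simps)

lemma symm_add: "symm A \<Longrightarrow> symm B \<Longrightarrow> symm (A + B)"
  by (simp add: symm_def mv_add inner_add_right)
lemma symm_scale: "symm A \<Longrightarrow> symm (c *\<^sub>R A)"
  by (simp add: symm_def mv_scale)
lemma symm_sum: "finite I \<Longrightarrow> (\<And>j. j \<in> I \<Longrightarrow> symm (A j)) \<Longrightarrow> symm (\<Sum>j\<in>I. A j)"
  by (induct I rule: finite_induct) (simp_all add: symm_add, simp add: symm_def)
lemma symm_id: "symm (mat 1)"
  by (simp add: symm_def inner_commute)

lemma mv_diff: "A *v (a - b) = A *v a - A *v (b::real^'p)"
  by (simp add: matrix_vector_mult_def vec_eq_iff algebra_simps sum_subtractf)

lemma var:
  fixes A :: "real^'p^'p"
  assumes sA: "symm A" and c: "c > 0" and pd: "\<And>y. Q A y \<ge> c * (y \<bullet> y)"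
  shows "invertible A" "A *v (matrix_inv A *v x) = x"
    "2 * (x \<bullet> y) - Q A y \<le> Q (matrix_inv A) x"
    "Q (matrix_inv A) x = 2 * (x \<bullet> (matrix_inv A *v x)) - Q A (matrix_inv A *v x)"
proof -
  have "inj ((*v) A)"
  proof (rule injI)
    fix a b :: "real^'p" assume "A *v a = A *v b"
    then have "Q A (a - b) = 0" by (simp add: Q_def mv_diff)
    with pd[of "a - b"] c have "(a - b) \<bullet> (a - b) \<le> 0"
      by (simp add: mult_le_0_iff)
    then show "a = b" by (metis inner_gt_zero_iff linorder_not_less right_minus_eq)
  qed
  then obtain B where "B ** A = mat 1" using matrix_left_invertible_injective by blast
  then show inv: "invertible A" using invertible_left_inverse by blast
  then have "\<exists>A'. A ** A' = mat 1 \<and> A' ** A = mat 1" unfolding invertible_def by blast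
  then have "A ** matrix_inv A = mat 1 \<and> matrix_inv A ** A = mat 1"
    unfolding matrix_inv_def by (rule someI_ex)
  then have AN: "A ** matrix_inv A = mat 1" by blast
  show Ax: "A *v (matrix_inv A *v x) = x" for x
    by (simp add: matrix_vector_mul_assoc AN)
  define ys where "ys = matrix_inv A *v x"
  have QN: "Q (matrix_inv A) x = Q A ys"
    using Ax[of x] by (simp add: Q_def ys_def inner_commute)
  have "0 \<le> Q A (y - ys)" using pd[of "y - ys"] c by (meson inner_ge_zero order_trans zero_le_mult_iff less_imp_le)
  also have "Q A (y - ys) = Q A y - 2 * (x \<bullet> y) + Q A ys"
    using sA Ax[of x] unfolding Q_def symm_def ys_def[symmetric]
    by (simp add: mv_diff inner_diff_left inner_diff_right inner_commute)
  finally show "2 * (x \<bullet> y) - Q A y \<le> Q (matrix_inv A) x" using QN by simp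
  show "Q (matrix_inv A) x = 2 * (x \<bullet> (matrix_inv A *v x)) - Q A (matrix_inv A *v x)"
    using QN Ax[of x] unfolding ys_def[symmetric] by (simp add: Q_def inner_commute)
qed




locale lam =
  fixes M :: "'w measure" and w :: "'n::finite \<Rightarrow> 'w \<Rightarrow> real^'p::finite" and \<gamma> :: real
  assumes gpos: "\<gamma> > 0"
    and wint: "\<And>i. integrable M (\<lambda>x. outer (w i x))"
    and wpos: "\<And>i. (\<integral>x. w i x \<bullet> w i x \<partial>M) > 0"
begin

definition S :: "'n \<Rightarrow> real^'p^'p" where "S i = integral\<^sup>L M (\<lambda>x. outer (w i x))"
definition tr :: "'n \<Rightarrow> real" where "tr i = (\<integral>x. w i x \<bullet> w i x \<partial>M)"
definition Am :: "real^'n \<Rightarrow> real^'p^'p" where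
  "Am c = (1 / real CARD('n)) *\<^sub>R (\<Sum>j\<in>UNIV. (c$j) *\<^sub>R S j) + \<gamma> *\<^sub>R mat 1"
definition h :: "real^'n \<Rightarrow> 'n \<Rightarrow> real" where
  "h c i = (1 / real CARD('n)) * trace (S i ** matrix_inv (Am c))"

lemma tr_pos: "tr i > 0" using wpos by (simp add: tr_def)

lemma bl: "linear f \<Longrightarrow> bounded_linear (f :: real^'p^'p \<Rightarrow> real)"
  using linear_conv_bounded_linear by blast

lemma int_bil: "integrable M (\<lambda>x. (w i x \<bullet> y) * (w i x \<bullet> z))"
  using integrable_bounded_linear[OF bl[OF linear_bil[of y z]] wint[of i]] by (simp add: bil_outer)

lemma S_bil: "y \<bullet> (S i *v z) = (\<integral>x. (w i x \<bullet> y) * (w i x \<bullet> z) \<partial>M)"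
  using integral_bounded_linear[OF bl[OF linear_bil[of y z]] wint[of i]] by (simp add: bil_outer S_def)

lemma symm_S: "symm (S i)"
  unfolding symm_def S_bil by (simp add: mult.commute)

lemma int_tr: "integrable M (\<lambda>x. w i x \<bullet> (N *v w i x))"
  using integrable_bounded_linear[OF bl[OF linear_trace_mul[of N]] wint[of i]] by (simp add: trace_outer)

lemma trS: "trace (S i ** N) = (\<integral>x. w i x \<bullet> (N *v w i x) \<partial>M)"
  using integral_bounded_linear[OF bl[OF linear_trace_mul[of N]] wint[of i]] by (simp add: trace_outer S_def)

lemma int_ww: "integrable M (\<lambda>x. w i x \<bullet> w i x)"
  using int_tr[of i "mat 1"] by simp

lemma QS: "Q (S j) y = (\<integral>x. (w j x \<bullet> y)^2 \<partial>M)"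
  unfolding Q_def S_bil by (simp add: power2_eq_square)

lemma QS_nonneg: "Q (S j) y \<ge> 0"
  unfolding QS by simp

lemma QS_le: "Q (S j) y \<le> tr j * (y \<bullet> y)"
proof -
  have "Q (S j) y \<le> (\<integral>x. (w j x \<bullet> w j x) * (y \<bullet> y) \<partial>M)"
    unfolding QS
    by (rule integral_mono) (use int_bil[of j y y] int_ww[of j] Cauchy_Schwarz_ineq in
        \<open>auto simp: power2_eq_square\<close>)
  also have "\<dots> = tr j * (y \<bullet> y)" by (simp add: tr_def)
  finally show ?thesis .
qed

definition nonneg :: "real^'n \<Rightarrow> bool" where "nonneg c \<longleftrightarrow> (\<forall>j. c$j \<ge> 0)"

lemma Q_Am: "Q (Am c) y = (1 / real CARD('n)) * (\<Sum>j\<in>UNIV. c$j * Q (S j) y) + \<gamma> * (y \<bullet> y)"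
  by (simp add: Am_def Q_add Q_scale Q_sum Q_id)

lemma symm_Am: "symm (Am c)"
  unfolding Am_def
  by (intro symm_add symm_scale symm_sum symm_S symm_id) auto

lemma Am_pd: "nonneg c \<Longrightarrow> Q (Am c) y \<ge> \<gamma> * (y \<bullet> y)"
  unfolding Q_Am nonneg_def
  by (simp add: QS_nonneg sum_nonneg)

lemmas varAm = var[OF symm_Am gpos Am_pd]

lemma cmpQ:
  assumes c: "nonneg c" and c': "nonneg c'" and b: "\<beta> \<ge> 1" and le: "\<And>j. c'$j \<le> \<beta> * c$j"
  shows "Q (matrix_inv (Am c)) x \<le> \<beta> * Q (matrix_inv (Am c')) x
           - \<gamma> * (1 - 1/\<beta>) * ((matrix_inv (Am c) *v x) \<bullet> (matrix_inv (Am c) *v x))"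
    and "Am c *v (matrix_inv (Am c) *v x) = x"
proof -
  define ys where "ys = matrix_inv (Am c) *v x"
  define n where "n = real CARD('n)"
  have n: "n > 0" by (simp add: n_def)
  have e1: "Q (matrix_inv (Am c)) x = 2 * (x \<bullet> ys) - Q (Am c) ys"
    unfolding ys_def by (rule varAm(4)[OF c])
  have "(\<Sum>j\<in>UNIV. (c'$j / \<beta>) * Q (S j) ys) \<le> (\<Sum>j\<in>UNIV. c$j * Q (S j) ys)"
    using b le QS_nonneg by (intro sum_mono mult_right_mono) (auto simp: divide_le_eq mult.commute)
  also have "(\<Sum>j\<in>UNIV. (c'$j / \<beta>) * Q (S j) ys) = (\<Sum>j\<in>UNIV. c'$j * Q (S j) ys) / \<beta>"
    by (simp add: sum_divide_distrib)
  finally have s1: "(\<Sum>j\<in>UNIV. c'$j * Q (S j) ys) / \<beta> \<le> (\<Sum>j\<in>UNIV. c$j * Q (S j) ys)" .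
  have e2: "2 * (x \<bullet> ((1/\<beta>) *\<^sub>R ys)) - Q (Am c') ((1/\<beta>) *\<^sub>R ys) \<le> Q (matrix_inv (Am c')) x"
    by (rule varAm(3)[OF c'])
  have e3: "2 * (x \<bullet> ((1/\<beta>) *\<^sub>R ys)) - Q (Am c') ((1/\<beta>) *\<^sub>R ys)
      = (2 * (x \<bullet> ys) - Q (Am c') ys / \<beta>) / \<beta>"
    using b by (simp add: Q_vscale power2_eq_square field_simps)
  have A: "Q (Am c) ys = (1/n) * (\<Sum>j\<in>UNIV. c$j * Q (S j) ys) + \<gamma> * (ys \<bullet> ys)"
    unfolding Q_Am n_def ..
  have A': "Q (Am c') ys = (1/n) * (\<Sum>j\<in>UNIV. c'$j * Q (S j) ys) + \<gamma> * (ys \<bullet> ys)"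
    unfolding Q_Am n_def ..
  have "Q (Am c) ys \<ge> (Q (Am c') ys - \<gamma> * (ys \<bullet> ys)) / \<beta> + \<gamma> * (ys \<bullet> ys)"
    using s1 n b unfolding A A' by (simp add: field_simps)
  moreover have "2 * (x \<bullet> ys) - Q (Am c') ys / \<beta> \<le> \<beta> * Q (matrix_inv (Am c')) x"
    using e2 e3 b by (simp add: field_simps)
  ultimately show "Q (matrix_inv (Am c)) x \<le> \<beta> * Q (matrix_inv (Am c')) x
           - \<gamma> * (1 - 1/\<beta>) * ((matrix_inv (Am c) *v x) \<bullet> (matrix_inv (Am c) *v x))"
    unfolding e1 ys_def[symmetric] using b by (simp add: field_simps)
  show "Am c *v (matrix_inv (Am c) *v x) = x" by (rule varAm(2)[OF c])
qed

lemma h_int: "h c i = (1 / real CARD('n)) * (\<integral>x. Q (matrix_inv (Am c)) (w i x) \<partial>M)"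
  unfolding h_def trS Q_def ..

lemma h_cmp:
  assumes c: "nonneg c" and c': "nonneg c'" and b: "\<beta> \<ge> 1" and le: "\<And>j. c'$j \<le> \<beta> * c$j"
  shows "h c i \<le> \<beta> * h c' i" and "\<beta> > 1 \<Longrightarrow> h c i < \<beta> * h c' i"
proof -
  define f where "f x = Q (matrix_inv (Am c)) (w i x)" for x
  define g where "g x = Q (matrix_inv (Am c')) (w i x)" for x
  define ys where "ys x = matrix_inv (Am c) *v w i x" for x
  have fi: "integrable M f" unfolding f_def Q_def by (rule int_tr)
  have gi: "integrable M g" unfolding g_def Q_def by (rule int_tr)
  have bnd: "f x \<le> \<beta> * g x - \<gamma> * (1 - 1/\<beta>) * (ys x \<bullet> ys x)" for x
    unfolding f_def g_def ys_def by (rule cmpQ(1)[OF c c' b le])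
  have ys0: "w i x \<noteq> 0 \<Longrightarrow> ys x \<noteq> 0" for x
    using cmpQ(2)[OF c c' b le, of "w i x"] unfolding ys_def by auto
  have nn: "\<gamma> * (1 - 1/\<beta>) * (ys x \<bullet> ys x) \<ge> 0" for x
    using gpos b by (intro mult_nonneg_nonneg) (auto simp: field_simps)
  have d: "0 \<le> \<beta> * g x - f x" for x using bnd[of x] nn[of x] by linarith
  have "integral\<^sup>L M f \<le> integral\<^sup>L M (\<lambda>x. \<beta> * g x)"
    using d fi gi by (intro integral_mono) auto
  then have I: "integral\<^sup>L M f \<le> \<beta> * integral\<^sup>L M g" by simp
  then show "h c i \<le> \<beta> * h c' i"
    unfolding h_int f_def g_def by (simp add: divide_right_mono)
  assume b1: "\<beta> > 1"
  have "integral\<^sup>L M f \<noteq> \<beta> * integral\<^sup>L M g"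
  proof
    assume eq: "integral\<^sup>L M f = \<beta> * integral\<^sup>L M g"
    have di: "integrable M (\<lambda>x. \<beta> * g x - f x)" using fi gi by auto
    have "integral\<^sup>L M (\<lambda>x. \<beta> * g x - f x) = 0" using eq fi gi by simp
    then have "AE x in M. \<beta> * g x - f x = 0"
      using integral_nonneg_eq_0_iff_AE[OF di] d by auto
    then have "AE x in M. w i x \<bullet> w i x = 0"
    proof (rule AE_mp, intro AE_I2 impI)
      fix x assume z: "\<beta> * g x - f x = 0"
      show "w i x \<bullet> w i x = 0"
      proof (rule ccontr)
        assume "w i x \<bullet> w i x \<noteq> 0"
        then have "ys x \<noteq> 0" using ys0 by auto
        then have "ys x \<bullet> ys x > 0" by simp
        moreover have "\<gamma> * (1 - 1/\<beta>) > 0" using gpos b1 by (simp add: field_simps)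
        ultimately have "\<gamma> * (1 - 1/\<beta>) * (ys x \<bullet> ys x) > 0" by simp
        with bnd[of x] z show False by linarith
      qed
    qed
    then have "(\<integral>x. w i x \<bullet> w i x \<partial>M) = 0" by (rule integral_eq_zero_AE)
    with wpos[of i] show False by simp
  qed
  with I have "integral\<^sup>L M f < \<beta> * integral\<^sup>L M g" by simp
  then show "h c i < \<beta> * h c' i"
    unfolding h_int f_def g_def by (simp add: divide_strict_right_mono)
qed

lemma QN_upper: assumes c: "nonneg c" shows "Q (matrix_inv (Am c)) x \<le> (x \<bullet> x) / \<gamma>"
proof -
  define ys where "ys = matrix_inv (Am c) *v x"
  have e1: "Q (matrix_inv (Am c)) x = 2 * (x \<bullet> ys) - Q (Am c) ys"
    unfolding ys_def by (rule varAm(4)[OF c])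
  have "Q (Am c) ys \<ge> \<gamma> * (ys \<bullet> ys)" by (rule Am_pd[OF c])
  moreover have "0 \<le> (x - \<gamma> *\<^sub>R ys) \<bullet> (x - \<gamma> *\<^sub>R ys)" by simp
  then have "0 \<le> x \<bullet> x - 2 * \<gamma> * (x \<bullet> ys) + \<gamma> * \<gamma> * (ys \<bullet> ys)"
    by (simp add: inner_diff_left inner_diff_right inner_commute algebra_simps)
  ultimately show ?thesis unfolding e1 using gpos
    by (simp add: field_simps) (smt (verit) mult_left_mono)
qed

lemma h_upper: assumes c: "nonneg c" shows "h c i \<le> tr i / (real CARD('n) * \<gamma>)"
proof -
  have "(\<integral>x. Q (matrix_inv (Am c)) (w i x) \<partial>M) \<le> (\<integral>x. (w i x \<bullet> w i x) / \<gamma> \<partial>M)"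
    using QN_upper[OF c] int_ww[of i] int_tr[of i] unfolding Q_def
    by (intro integral_mono) auto
  also have "\<dots> = tr i / \<gamma>" by (simp add: tr_def)
  finally show ?thesis unfolding h_int by (simp add: divide_right_mono field_simps)
qed

lemma Am_upper: assumes c: "nonneg c" and C: "\<And>j. c$j \<le> C"
  shows "Q (Am c) y \<le> (C * (\<Sum>j\<in>UNIV. tr j) / real CARD('n) + \<gamma>) * (y \<bullet> y)"
proof -
  have C0: "0 \<le> C" using c C unfolding nonneg_def by (meson order_trans)
  have "(\<Sum>j\<in>UNIV. c$j * Q (S j) y) \<le> (\<Sum>j\<in>UNIV. C * (tr j * (y \<bullet> y)))"
    using c C C0 QS_le QS_nonneg unfolding nonneg_def
    by (intro sum_mono mult_mono) auto
  also have "\<dots> = C * (\<Sum>j\<in>UNIV. tr j) * (y \<bullet> y)"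
    by (simp add: sum_distrib_left sum_distrib_right mult_ac)
  finally show ?thesis unfolding Q_Am by (simp add: field_simps divide_right_mono)
qed

lemma h_lower: assumes c: "nonneg c" and C: "\<And>j. c$j \<le> C" and C0: "C \<ge> 0"
  shows "h c i \<ge> tr i / (real CARD('n) * (C * (\<Sum>j\<in>UNIV. tr j) / real CARD('n) + \<gamma>))"
proof -
  define K where "K = C * (\<Sum>j\<in>UNIV. tr j) / real CARD('n) + \<gamma>"
  have K: "K > 0" unfolding K_def using C0 tr_pos gpos
    by (intro add_nonneg_pos divide_nonneg_pos mult_nonneg_nonneg sum_nonneg) (auto intro: less_imp_le)
  have low: "(x \<bullet> x) / K \<le> Q (matrix_inv (Am c)) x" for x
  proof -
    have "2 * (x \<bullet> ((1/K) *\<^sub>R x)) - Q (Am c) ((1/K) *\<^sub>R x) \<le> Q (matrix_inv (Am c)) x"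
      by (rule varAm(3)[OF c])
    moreover have "Q (Am c) ((1/K) *\<^sub>R x) \<le> (x \<bullet> x) / K"
      using Am_upper[OF c C, of "(1/K) *\<^sub>R x"] K unfolding K_def[symmetric]
      by (simp add: power2_eq_square field_simps)
    ultimately show ?thesis using K by (simp add: field_simps)
  qed
  have "tr i / K \<le> (\<integral>x. Q (matrix_inv (Am c)) (w i x) \<partial>M)"
  proof -
    have "(\<integral>x. (w i x \<bullet> w i x) / K \<partial>M) \<le> (\<integral>x. Q (matrix_inv (Am c)) (w i x) \<partial>M)"
      using low int_ww[of i] int_tr[of i] unfolding Q_def
      by (intro integral_mono) auto
    then show ?thesis by (simp add: tr_def)
  qed
  then show ?thesis unfolding h_int K_def[symmetric] using K
    by (simp add: field_simps divide_right_mono)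
qed

end



lemma box_fp:
  fixes F :: "real^'n::finite \<Rightarrow> real^'n"
  assumes le: "\<And>i. lo$i \<le> hi$i" and cont: "continuous_on (cbox lo hi) F"
    and into: "\<And>x. x \<in> cbox lo hi \<Longrightarrow> F x \<in> cbox lo hi"
  shows "\<exists>x\<in>cbox lo hi. F x = x"
proof -
  have "lo \<in> cbox lo hi" using le by (simp add: mem_box_cart)
  then obtain x where "x \<in> cbox lo hi" "F x = x"
    using brouwer[OF compact_cbox convex_box(1) _ cont] into by blast
  then show ?thesis by blast
qed

lemma max_ratio:
  fixes x y :: "real^'n::finite"
  assumes "posdiag x" "posdiag y"
  shows "\<exists>\<beta>>0. (\<forall>i. x$i \<le> \<beta> * y$i) \<and> (\<exists>i. x$i = \<beta> * y$i)"
proof -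
  define f where "f i = x$i / y$i" for i
  have "Max (range f) \<in> range f" by (rule Max_in) auto
  then obtain i0 where m: "Max (range f) = f i0" by (metis rangeE)
  have i0: "\<forall>i. f i \<le> f i0"
  proof
    fix i have "f i \<le> Max (range f)" by (rule Max_ge) auto
    then show "f i \<le> f i0" using m by simp
  qed
  have y: "\<And>i. y$i > 0" and x: "\<And>i. x$i > 0" using assms by (auto simp: posdiag_def)
  show ?thesis
  proof (intro exI[of _ "f i0"] conjI allI exI[of _ i0])
    show "f i0 > 0" using x y by (simp add: f_def)
    fix i show "x$i \<le> f i0 * y$i" using i0[rule_format, of i] y[of i]
      by (simp add: f_def pos_divide_le_eq)
  next
    show "x$i0 = f i0 * y$i0" using y[of i0] by (simp add: f_def)
  qed
qed

lemma sym_ratio: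
  fixes x y :: "real^'n::finite"
  assumes "posdiag x" "posdiag y"
  shows "\<exists>r\<ge>1. (\<forall>i. x$i \<le> r * y$i \<and> y$i \<le> r * x$i) \<and> (\<exists>i. x$i = r * y$i \<or> y$i = r * x$i)"
proof -
  obtain b1 where b1: "b1 > 0" "\<forall>i. x$i \<le> b1 * y$i" "\<exists>i. x$i = b1 * y$i"
    using max_ratio[OF assms] by blast
  obtain b2 where b2: "b2 > 0" "\<forall>i. y$i \<le> b2 * x$i" "\<exists>i. y$i = b2 * x$i"
    using max_ratio[OF assms(2,1)] by blast
  have y: "\<And>i. y$i > 0" and x: "\<And>i. x$i > 0" using assms by (auto simp: posdiag_def)
  obtain i1 where i1: "x$i1 = b1 * y$i1" using b1 by blast
  have "y$i1 \<le> b2 * x$i1" using b2 by blast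
  then have "y$i1 \<le> b2 * b1 * y$i1" using i1 by simp
  then have bb: "1 \<le> b2 * b1" using y[of i1] by simp
  show ?thesis
  proof (cases "b1 \<le> b2")
    case True
    have "b1 * b2 \<le> b2 * b2" using True b2 by (simp add: mult_right_mono)
    then have "1 \<le> b2 * b2" using bb by (simp add: mult.commute)
    then have b21: "1 \<le> b2" using b2(1) by (smt (verit, best) mult_less_cancel_left2)
    have "\<forall>i. x$i \<le> b2 * y$i"
    proof
      fix i have "b1 * y$i \<le> b2 * y$i" using True y[of i] by (simp add: mult_right_mono)
      then show "x$i \<le> b2 * y$i" using b1(2) by (meson order_trans)
    qed
    then show ?thesis using b21 b2 by blast
  next
    case False
    have "b2 * b1 \<le> b1 * b1" using False b1 by (simp add: mult_right_mono)
    then have "1 \<le> b1 * b1" using bb by simp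
    then have b11: "1 \<le> b1" using b1(1) by (smt (verit, best) mult_less_cancel_left2)
    have "\<forall>i. y$i \<le> b1 * x$i"
    proof
      fix i have "b2 * x$i \<le> b1 * x$i" using False x[of i] by (simp add: mult_right_mono)
      then show "y$i \<le> b1 * x$i" using b2(2) by (meson order_trans)
    qed
    then show ?thesis using b11 b1 by blast
  qed
qed

lemma thompson_cont:
  fixes F :: "real^'n::finite \<Rightarrow> real^'n"
  assumes a: "a > 0" and P: "\<And>x i. x \<in> P \<Longrightarrow> a \<le> x$i"
    and B: "\<And>x i. x \<in> P \<Longrightarrow> F x $ i \<le> B"
    and L: "\<And>x y \<alpha> i. x \<in> P \<Longrightarrow> y \<in> P \<Longrightarrow> \<alpha> \<ge> 1 \<Longrightarrow>
              (\<forall>i. x$i \<le> \<alpha> * y$i \<and> y$i \<le> \<alpha> * x$i) \<Longrightarrow> F x $ i \<le> \<alpha> * F y $ i"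
  shows "continuous_on P F"
  unfolding continuous_on_iff
proof (intro ballI allI impI)
  fix x e assume x: "x \<in> P" and e: "(0::real) < e"
  define B' where "B' = max B 1"
  define n where "n = real CARD('n)"
  have n: "n > 0" by (simp add: n_def)
  have B': "B' > 0" "B \<le> B'" by (auto simp: B'_def)
  define d where "d = e * a / (n * B')"
  have d: "d > 0" using e a n B' by (simp add: d_def)
  show "\<exists>d>0. \<forall>y\<in>P. dist y x < d \<longrightarrow> dist (F y) (F x) < e"
  proof (intro exI[of _ d] conjI ballI impI d)
    fix y assume y: "y \<in> P" and dy: "dist y x < d"
    define r where "r = dist y x"
    define \<alpha> where "\<alpha> = 1 + r / a"
    have r0: "r \<ge> 0" by (simp add: r_def)
    have al: "\<alpha> \<ge> 1" using r0 a by (simp add: \<alpha>_def)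
    have comp: "\<bar>y$i - x$i\<bar> \<le> r" for i
      using component_le_norm_cart[of "y - x" i] by (simp add: r_def dist_norm)
    have rat: "\<forall>i. y$i \<le> \<alpha> * x$i \<and> x$i \<le> \<alpha> * y$i"
    proof
      fix i
      have xa: "a \<le> x$i" "a \<le> y$i" using P x y by auto
      have "a * r \<le> r * x$i" "a * r \<le> r * y$i" using xa r0
        by (metis mult.commute mult_right_mono)+
      then have "r \<le> r / a * x$i" "r \<le> r / a * y$i" using a
        by (auto simp: field_simps)
      then show "y$i \<le> \<alpha> * x$i \<and> x$i \<le> \<alpha> * y$i"
        using comp[of i] by (auto simp: \<alpha>_def algebra_simps abs_le_iff)
    qed
    have cb: "\<bar>F y $ i - F x $ i\<bar> \<le> r / a * B'" for i
    proof -
      have 1: "F y $ i \<le> \<alpha> * F x $ i" by (rule L[OF y x al rat])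
      have 2: "F x $ i \<le> \<alpha> * F y $ i" using rat by (intro L[OF x y al]) auto
      have "(\<alpha> - 1) * F x $ i \<le> (\<alpha> - 1) * B'" "(\<alpha> - 1) * F y $ i \<le> (\<alpha> - 1) * B'"
        using B[OF x, of i] B[OF y, of i] B' al by (auto intro!: mult_left_mono)
      then show ?thesis using 1 2 by (auto simp: \<alpha>_def algebra_simps abs_le_iff)
    qed
    have "dist (F y) (F x) \<le> (\<Sum>i\<in>UNIV. \<bar>(F y - F x) $ i\<bar>)"
      unfolding dist_norm by (rule norm_le_l1_cart)
    also have "\<dots> \<le> (\<Sum>i\<in>(UNIV::'n set). r / a * B')"
      using cb by (intro sum_mono) simp
    also have "\<dots> = n * (r / a * B')" by (simp add: n_def)
    also have "\<dots> < n * (d / a * B')"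
      using dy n a B' by (simp add: r_def divide_strict_right_mono)
    also have "\<dots> = e" using n a B' by (simp add: d_def field_simps)
    finally show "dist (F y) (F x) < e" .
  qed
qed




lemma pos_lower: "posdiag (v::real^'n::finite) \<Longrightarrow> \<exists>a>0. \<forall>i. a \<le> v$i"
proof -
  assume v: "posdiag v"
  have "Min (range (\<lambda>i. v$i)) \<in> range (\<lambda>i. v$i)" by (rule Min_in) auto
  then obtain i0 where m: "Min (range (\<lambda>i. v$i)) = v$i0" by (metis rangeE)
  show ?thesis
  proof (intro exI[of _ "v$i0"] conjI allI)
    show "v$i0 > 0" using v by (simp add: posdiag_def)
    fix i have "Min (range (\<lambda>i. v$i)) \<le> v$i" by (rule Min_le) auto
    then show "v$i0 \<le> v$i" using m by simp
  qed
qed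

lemma cv_le:
  fixes D D' l l' :: real
  assumes "D > 0" "D' > 0" "l > 0" "l' > 0" "\<beta> \<ge> 1" "D' \<le> \<beta> * D" "l \<le> \<beta> * l'"
  shows "D' / (1 + D' * l') \<le> \<beta> * (D / (1 + D * l))"
proof -
  have "D' * D * l \<le> D' * D * (\<beta> * l')" using assms by (intro mult_left_mono) auto
  moreover have "D' * (1 + D * l) = D' + D' * D * l" "\<beta> * D * (1 + D' * l') = \<beta> * D + D' * D * (\<beta> * l')"
    by (simp_all add: algebra_simps)
  ultimately have le: "D' * (1 + D * l) \<le> \<beta> * D * (1 + D' * l')" using assms(6) by (simp add: mult.commute)
  have p1: "1 + D * l > 0" "1 + D' * l' > 0" using assms by (simp_all add: add_pos_pos)
  have "D' / (1 + D' * l') = D' * (1 + D * l) / ((1 + D' * l') * (1 + D * l))"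
    using p1 by simp
  also have "\<dots> \<le> \<beta> * D * (1 + D' * l') / ((1 + D' * l') * (1 + D * l))"
    using p1 le by (intro divide_right_mono) auto
  also have "\<dots> = \<beta> * (D / (1 + D * l))" using p1 by simp
  finally show ?thesis .
qed

context lam
begin

definition cv :: "real^'n \<Rightarrow> real^'n \<Rightarrow> real^'n" where
  "cv D l = (\<chi> j. D$j / (1 + D$j * l$j))"

definition isSol :: "real^'n \<Rightarrow> real^'n \<Rightarrow> bool" where
  "isSol D l \<longleftrightarrow> posdiag l \<and> (\<forall>i. l$i = h (cv D l) i)"

lemma Lambda_body:
  "(posdiag l \<and> (\<forall>i. l $ i = (1 / real CARD('n)) * trace (S i **
        matrix_inv ((1 / real CARD('n)) *\<^sub>R (\<Sum>j\<in>UNIV. (D $ j / (1 + D $ j * l $ j)) *\<^sub>R S j)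
                    + \<gamma> *\<^sub>R mat 1)))) \<longleftrightarrow> isSol D l"
  by (simp add: isSol_def h_def Am_def cv_def)

lemma cv_nonneg: "posdiag D \<Longrightarrow> (\<And>j. l$j \<ge> 0) \<Longrightarrow> nonneg (cv D l)"
  unfolding nonneg_def cv_def posdiag_def
  by (simp add: add_nonneg_nonneg less_imp_le)

lemma cv_upper: "posdiag D \<Longrightarrow> (\<And>j. l$j \<ge> 0) \<Longrightarrow> cv D l $ j \<le> D$j"
  unfolding cv_def posdiag_def
  by (simp add: divide_le_eq add_nonneg_nonneg less_imp_le)

lemma cv_cmp: "posdiag D \<Longrightarrow> posdiag D' \<Longrightarrow> posdiag l \<Longrightarrow> posdiag l' \<Longrightarrow> \<beta> \<ge> 1 \<Longrightarrow>
   (\<And>j. D'$j \<le> \<beta> * D$j) \<Longrightarrow> (\<And>j. l$j \<le> \<beta> * l'$j) \<Longrightarrow> cv D' l' $ j \<le> \<beta> * cv D l $ j"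
  unfolding cv_def vec_lambda_beta by (rule cv_le) (auto simp: posdiag_def)

lemma core:
  assumes D: "posdiag D" "posdiag D'" and s: "isSol D l" "isSol D' l'" and b: "\<beta> > 1"
    and le1: "\<And>j. D'$j \<le> \<beta> * D$j" and le2: "\<And>j. l$j \<le> \<beta> * l'$j"
  shows "l$i < \<beta> * l'$i"
proof -
  have p: "posdiag l" "posdiag l'" using s by (auto simp: isSol_def)
  then have nn: "\<And>j. l$j \<ge> 0" "\<And>j. l'$j \<ge> 0" by (auto simp: posdiag_def less_imp_le)
  have "h (cv D l) i < \<beta> * h (cv D' l') i"
    using b by (intro h_cmp(2) cv_nonneg[OF D(1) nn(1)] cv_nonneg[OF D(2) nn(2)]
        cv_cmp[OF D p] le1 le2) auto
  then show ?thesis using s by (simp add: isSol_def)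
qed

lemma cmp_sol:
  assumes D: "posdiag D" "posdiag D'" and s: "isSol D l" "isSol D' l'" and a: "\<alpha> \<ge> 1"
    and le: "\<And>j. D'$j \<le> \<alpha> * D$j"
  shows "l$i \<le> \<alpha> * l'$i" and "\<alpha> > 1 \<Longrightarrow> l$i < \<alpha> * l'$i"
proof -
  have p: "posdiag l" "posdiag l'" using s by (auto simp: isSol_def)
  obtain \<beta> where b: "\<beta> > 0" "\<forall>j. l$j \<le> \<beta> * l'$j" "\<exists>j. l$j = \<beta> * l'$j"
    using max_ratio[OF p] by blast
  have ba: "\<beta> \<le> \<alpha>"
  proof (rule ccontr)
    assume "\<not> \<beta> \<le> \<alpha>"
    then have b1: "\<beta> > 1" "\<alpha> < \<beta>" using a by auto
    obtain j where j: "l$j = \<beta> * l'$j" using b by blast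
    have "D'$k \<le> \<beta> * D$k" for k
      using le[of k] b1 D(1) by (smt (verit) mult_right_mono posdiag_def)
    then have "l$j < \<beta> * l'$j" using b by (intro core[OF D s b1(1)]) auto
    then show False using j by simp
  qed
  have lj: "l$j \<le> \<alpha> * l'$j" for j
    using b(2) ba p(2) by (smt (verit) mult_right_mono posdiag_def)
  then show "l$i \<le> \<alpha> * l'$i" .
  assume "\<alpha> > 1"
  then show "l$i < \<alpha> * l'$i" by (intro core[OF D s _ le lj])
qed

lemma sol_unique: "posdiag D \<Longrightarrow> isSol D l \<Longrightarrow> isSol D l' \<Longrightarrow> l = l'"
  using cmp_sol(1)[of D D l l' 1] cmp_sol(1)[of D D l' l 1]
  by (simp add: vec_eq_iff) (meson order_antisym)

lemma sol_exists:
  assumes D: "posdiag D" shows "\<exists>l. isSol D l"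
proof -
  define C where "C = (\<Sum>j\<in>UNIV. D$j)"
  have DC: "D$j \<le> C" for j unfolding C_def using D
    by (intro member_le_sum) (auto simp: posdiag_def less_imp_le)
  have C0: "C \<ge> 0" unfolding C_def using D by (intro sum_nonneg) (auto simp: posdiag_def less_imp_le)
  define K where "K = C * (\<Sum>j\<in>UNIV. tr j) / real CARD('n) + \<gamma>"
  have "C * (\<Sum>j\<in>UNIV. tr j) / real CARD('n) \<ge> 0" using C0 tr_pos
    by (intro divide_nonneg_pos mult_nonneg_nonneg sum_nonneg) (auto intro: less_imp_le)
  then have K: "K \<ge> \<gamma>" unfolding K_def by simp
  define lo where "lo = (\<chi> i. tr i / (real CARD('n) * K))"
  define hi where "hi = (\<chi> i. tr i / (real CARD('n) * \<gamma>))"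
  have lohi: "lo$i \<le> hi$i" for i unfolding lo_def hi_def using K gpos tr_pos[of i]
    by (simp add: frac_le)
  have lopos: "posdiag lo" unfolding lo_def posdiag_def using K gpos tr_pos by simp
  obtain a where a: "a > 0" "\<And>i. a \<le> lo$i" using pos_lower[OF lopos] by blast
  define T where "T l = (\<chi> i. h (cv D l) i)" for l
  have inbox: "\<And>i. a \<le> l$i" if "l \<in> cbox lo hi" for l
    using that a by (auto simp: mem_box_cart intro: order_trans)
  have nnl: "\<And>j. l$j \<ge> 0" if "l \<in> cbox lo hi" for l
    using inbox[OF that] a by (meson less_imp_le order_trans)
  have Tin: "T l \<in> cbox lo hi" if l: "l \<in> cbox lo hi" for l
  proof -
    have c: "nonneg (cv D l)" by (rule cv_nonneg[OF D nnl[OF l]])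
    have cC: "cv D l $ j \<le> C" for j using cv_upper[OF D nnl[OF l], of j] DC[of j] by linarith
    show ?thesis unfolding mem_box_cart T_def
      using h_upper[OF c] h_lower[OF c cC C0] by (simp add: lo_def hi_def K_def)
  qed
  have cont: "continuous_on (cbox lo hi) T"
  proof (rule thompson_cont[OF a(1) inbox])
    fix l i assume l: "l \<in> cbox lo hi"
    have "hi$i \<le> (\<Sum>k\<in>UNIV. hi$k)" using gpos tr_pos
      by (intro member_le_sum) (auto simp: hi_def less_imp_le)
    then show "T l $ i \<le> (\<Sum>k\<in>UNIV. hi$k)" using Tin[OF l] unfolding mem_box_cart by (meson order_trans)
  next
    fix x y :: "real^'n" and \<alpha> i
    assume x: "x \<in> cbox lo hi" and y: "y \<in> cbox lo hi" and al: "\<alpha> \<ge> 1"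
      and r: "\<forall>i. x$i \<le> \<alpha> * y$i \<and> y$i \<le> \<alpha> * x$i"
    have px: "posdiag x" "posdiag y" using inbox[OF x] inbox[OF y] a
      by (auto simp: posdiag_def intro: less_le_trans)
    have "D$j \<le> \<alpha> * D$j" for j using al D by (simp add: posdiag_def)
    then have "cv D y $ j \<le> \<alpha> * cv D x $ j" for j
      using r by (intro cv_cmp[OF D D px al]) auto
    then show "T x $ i \<le> \<alpha> * T y $ i" unfolding T_def
      using h_cmp(1)[OF cv_nonneg[OF D nnl[OF x]] cv_nonneg[OF D nnl[OF y]] al] by simp
  qed auto
  obtain l where l: "l \<in> cbox lo hi" "T l = l" using box_fp[OF lohi cont Tin] by blast
  have "posdiag l" using inbox[OF l(1)] a by (auto simp: posdiag_def intro: less_le_trans)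
  moreover have "\<forall>i. l$i = h (cv D l) i" using l(2) by (simp add: T_def vec_eq_iff)
  ultimately show ?thesis unfolding isSol_def by blast
qed

lemma Lam_sol: "posdiag D \<Longrightarrow> isSol D (Lambda \<gamma> S D)"
proof -
  assume D: "posdiag D"
  have "\<exists>!l. isSol D l" using sol_exists[OF D] sol_unique[OF D] by blast
  then have "isSol D (THE l. isSol D l)" by (rule theI')
  then show ?thesis unfolding Lambda_def Lambda_body .
qed

end



lemma frac_cmp:
  fixes L L' d d' :: real
  assumes "L > 0" "L' > 0" "d > 0" "d' > 0" "\<alpha> \<ge> 1" "L \<le> \<alpha> * L'" "d' \<le> \<alpha> * d"
  shows "L / (1 + d * L) \<le> \<alpha> * (L' / (1 + d' * L'))"
    and "L < \<alpha> * L' \<Longrightarrow> L / (1 + d * L) < \<alpha> * (L' / (1 + d' * L'))"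
proof -
  have p1: "1 + d * L > 0" "1 + d' * L' > 0" using assms by (simp_all add: add_pos_pos)
  have m: "L * L' * d' \<le> L * L' * (\<alpha> * d)" using assms by (intro mult_left_mono) auto
  have e: "L * (1 + d' * L') = L + L * L' * d'" "\<alpha> * L' * (1 + d * L) = \<alpha> * L' + L * L' * (\<alpha> * d)"
    by (simp_all add: algebra_simps)
  have eq1: "L / (1 + d * L) = L * (1 + d' * L') / ((1 + d' * L') * (1 + d * L))"
    using p1 by simp
  have eq2: "\<alpha> * (L' / (1 + d' * L')) = \<alpha> * L' * (1 + d * L) / ((1 + d' * L') * (1 + d * L))"
    using p1 by simp
  have le: "L * (1 + d' * L') \<le> \<alpha> * L' * (1 + d * L)" using e m assms(6) by linarith
  show "L / (1 + d * L) \<le> \<alpha> * (L' / (1 + d' * L'))"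
    unfolding eq1 eq2 using p1 le by (intro divide_right_mono) auto
  assume "L < \<alpha> * L'"
  then have "L * (1 + d' * L') < \<alpha> * L' * (1 + d * L)" using e m by linarith
  then show "L / (1 + d * L) < \<alpha> * (L' / (1 + d' * L'))"
    unfolding eq1 eq2 using p1 by (intro divide_strict_right_mono) auto
qed

lemma frac_low:
  fixes a L d U :: real
  assumes "a > 0" "a \<le> L" "d > 0" "d \<le> U"
  shows "a / (1 + U * a) \<le> L / (1 + d * L)"
proof -
  have p1: "1 + d * L > 0" "1 + U * a > 0" using assms by (simp_all add: add_pos_pos)
  have "a * d * L \<le> a * U * L" using assms by (intro mult_right_mono mult_left_mono) auto
  moreover have "a * (1 + d * L) = a + a * d * L" "L * (1 + U * a) = L + a * U * L"
    by (simp_all add: algebra_simps)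
  ultimately have "a * (1 + d * L) \<le> L * (1 + U * a)" using assms(2) by linarith
  then show ?thesis using p1 by (simp add: divide_simps mult.commute)
qed

locale outerfp = lam M w \<gamma> for M :: "'w measure" and w :: "'n::finite \<Rightarrow> 'w \<Rightarrow> real^'p::finite"
  and \<gamma> :: real +
  fixes ut :: "real^'n \<Rightarrow> real^'n" and U :: real
  assumes ut_pos: "posdiag D \<Longrightarrow> posdiag (ut D)"
    and ut_bdd: "posdiag D \<Longrightarrow> ut D $ i \<le> U"
    and ut_lip: "posdiag D \<Longrightarrow> posdiag D' \<Longrightarrow> \<alpha> \<ge> 1 \<Longrightarrow> (\<forall>i. D$i \<le> \<alpha> * D'$i \<and> D'$i \<le> \<alpha> * D$i)
        \<Longrightarrow> ut D $ i \<le> \<alpha> * ut D' $ i"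
begin

definition G :: "real^'n \<Rightarrow> real^'n" where
  "G D = (\<chi> i. Lambda \<gamma> S (ut D) $ i / (1 + ut D $ i * Lambda \<gamma> S (ut D) $ i))"

lemma G_cmp:
  assumes D: "posdiag D" "posdiag D'" and al: "\<alpha> \<ge> 1"
    and r: "\<forall>i. D$i \<le> \<alpha> * D'$i \<and> D'$i \<le> \<alpha> * D$i"
  shows "G D $ i \<le> \<alpha> * G D' $ i" and "\<alpha> > 1 \<Longrightarrow> G D $ i < \<alpha> * G D' $ i"
proof -
  have r': "\<forall>i. D'$i \<le> \<alpha> * D$i \<and> D$i \<le> \<alpha> * D'$i" using r by auto
  have P: "posdiag (ut D)" "posdiag (ut D')" using ut_pos D by auto
  have s: "isSol (ut D) (Lambda \<gamma> S (ut D))" "isSol (ut D') (Lambda \<gamma> S (ut D'))"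
    using Lam_sol P by auto
  have pl: "posdiag (Lambda \<gamma> S (ut D))" "posdiag (Lambda \<gamma> S (ut D'))"
    using s by (auto simp: isSol_def)
  have dd: "ut D' $ j \<le> \<alpha> * ut D $ j" for j by (rule ut_lip[OF D(2) D(1) al r'])
  have c1: "Lambda \<gamma> S (ut D) $ i \<le> \<alpha> * Lambda \<gamma> S (ut D') $ i"
    by (rule cmp_sol(1)[OF P s al dd])
  show "G D $ i \<le> \<alpha> * G D' $ i" unfolding G_def vec_lambda_beta
    using P pl al c1 dd[of i] by (intro frac_cmp(1)) (auto simp: posdiag_def)
  assume a1: "\<alpha> > 1"
  have c2: "Lambda \<gamma> S (ut D) $ i < \<alpha> * Lambda \<gamma> S (ut D') $ i"
    by (rule cmp_sol(2)[OF P s al dd a1])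
  show "G D $ i < \<alpha> * G D' $ i" unfolding G_def vec_lambda_beta
    using P pl al c1 c2 dd[of i] by (intro frac_cmp(2)) (auto simp: posdiag_def)
qed

lemma G_unique:
  assumes D: "posdiag D" "posdiag D'" and f: "D = G D" "D' = G D'"
  shows "D = D'"
proof -
  obtain r where r: "r \<ge> 1" "\<forall>i. D$i \<le> r * D'$i \<and> D'$i \<le> r * D$i"
    "\<exists>i. D$i = r * D'$i \<or> D'$i = r * D$i"
    using sym_ratio[OF D] by blast
  have r': "\<forall>i. D'$i \<le> r * D$i \<and> D$i \<le> r * D'$i" using r by auto
  have "\<not> r > 1"
  proof
    assume r1: "r > 1"
    obtain i where "D$i = r * D'$i \<or> D'$i = r * D$i" using r by blast
    moreover have "G D $ i < r * G D' $ i" by (rule G_cmp(2)[OF D r(1,2) r1])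
    moreover have "G D' $ i < r * G D $ i" by (rule G_cmp(2)[OF D(2,1) r(1) r' r1])
    ultimately show False using f by (metis less_irrefl)
  qed
  then have "r = 1" using r by simp
  then show ?thesis using r by (simp add: vec_eq_iff order_antisym)
qed

lemma G_exists: "\<exists>D. posdiag D \<and> D = G D"
proof -
  obtain D0 :: "real^'n" where D0: "posdiag D0" by (intro that[of "\<chi> i. 1"]) (simp add: posdiag_def)
  have U0: "U \<ge> 0" using ut_bdd[OF D0] ut_pos[OF D0]
    by (meson less_imp_le order_trans posdiag_def)
  define K where "K = U * (\<Sum>j\<in>UNIV. tr j) / real CARD('n) + \<gamma>"
  have "U * (\<Sum>j\<in>UNIV. tr j) / real CARD('n) \<ge> 0" using U0 tr_pos
    by (intro divide_nonneg_pos mult_nonneg_nonneg sum_nonneg) (auto intro: less_imp_le)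
  then have K: "K \<ge> \<gamma>" unfolding K_def by simp
  define av where "av i = tr i / (real CARD('n) * K)" for i
  define lo where "lo = (\<chi> i. av i / (1 + U * av i))"
  define hi where "hi = (\<chi> i. tr i / (real CARD('n) * \<gamma>))"
  have av: "av i > 0" for i unfolding av_def using K gpos tr_pos[of i] by simp
  have avhi: "av i \<le> hi$i" for i unfolding av_def hi_def using K gpos tr_pos[of i]
    by (simp add: frac_le)
  have loav: "lo$i \<le> av i" for i unfolding lo_def using av[of i] U0
    by (simp add: divide_le_eq add_nonneg_nonneg algebra_simps)
       (smt (verit) mult_nonneg_nonneg)
  have lohi: "lo$i \<le> hi$i" for i using loav[of i] avhi[of i] by linarith
  have lopos: "posdiag lo" unfolding lo_def posdiag_def using av U0
    by (simp add: add_pos_nonneg) (meson add_pos_nonneg divide_pos_pos less_imp_le mult_nonneg_nonneg zero_less_one)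
  obtain a where a: "a > 0" "\<And>i. a \<le> lo$i" using pos_lower[OF lopos] by blast
  have inbox: "\<And>i. a \<le> D$i" if "D \<in> cbox lo hi" for D
    using that a by (auto simp: mem_box_cart intro: order_trans)
  have pbox: "posdiag D" if "D \<in> cbox lo hi" for D
    using inbox[OF that] a by (auto simp: posdiag_def intro: less_le_trans)
  have Gin: "G D \<in> cbox lo hi" if D: "D \<in> cbox lo hi" for D
  proof -
    have P: "posdiag (ut D)" using ut_pos pbox[OF D] by auto
    define L where "L = Lambda \<gamma> S (ut D)"
    have s: "isSol (ut D) L" unfolding L_def by (rule Lam_sol[OF P])
    have pl: "posdiag L" using s by (simp add: isSol_def)
    have nnl: "\<And>j. L$j \<ge> 0" using pl by (simp add: posdiag_def less_imp_le)
    have c: "nonneg (cv (ut D) L)" by (rule cv_nonneg[OF P nnl])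
    have cC: "cv (ut D) L $ j \<le> U" for j
      using cv_upper[OF P nnl, of j] ut_bdd[OF pbox[OF D], of j] by linarith
    have Lup: "L$i \<le> hi$i" for i using s h_upper[OF c, of i] by (simp add: isSol_def hi_def)
    have Llo: "av i \<le> L$i" for i using s h_lower[OF c cC U0, of i]
      by (simp add: isSol_def av_def K_def)
    have "G D $ i \<le> L$i" for i unfolding G_def L_def[symmetric] vec_lambda_beta
      using pl P by (simp add: posdiag_def divide_le_eq add_pos_pos less_imp_le)
    moreover have "lo$i \<le> G D $ i" for i unfolding G_def L_def[symmetric] vec_lambda_beta lo_def
      using frac_low[OF av Llo, of "ut D $ i" U] P ut_bdd[OF pbox[OF D], of i]
      by (simp add: posdiag_def)
    ultimately show ?thesis using Lup unfolding mem_box_cart by (meson order_trans)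
  qed
  have cont: "continuous_on (cbox lo hi) G"
  proof (rule thompson_cont[OF a(1) inbox])
    fix D i assume D: "D \<in> cbox lo hi"
    have "hi$i \<le> (\<Sum>k\<in>UNIV. hi$k)" using gpos tr_pos
      by (intro member_le_sum) (auto simp: hi_def less_imp_le)
    then show "G D $ i \<le> (\<Sum>k\<in>UNIV. hi$k)" using Gin[OF D] unfolding mem_box_cart
      by (meson order_trans)
  next
    fix x y :: "real^'n" and \<alpha> i
    assume x: "x \<in> cbox lo hi" and y: "y \<in> cbox lo hi" and al: "\<alpha> \<ge> 1"
      and r: "\<forall>i. x$i \<le> \<alpha> * y$i \<and> y$i \<le> \<alpha> * x$i"
    show "G x $ i \<le> \<alpha> * G y $ i" by (rule G_cmp(1)[OF pbox[OF x] pbox[OF y] al r])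
  qed auto
  obtain D where D: "D \<in> cbox lo hi" "G D = D" using box_fp[OF lohi cont Gin] by blast
  then show ?thesis using pbox[OF D(1)] by auto
qed

lemma G_ex1: "\<exists>!D. posdiag D \<and> D = (\<chi> i. Lambda \<gamma> S (ut D) $ i / (1 + ut D $ i * Lambda \<gamma> S (ut D) $ i))"
  using G_exists G_unique unfolding G_def[symmetric] by blast

end



lemma u_lip:
  fixes u :: "real \<Rightarrow> real"
  assumes u_pos: "\<forall>t>0. u t > 0"
    and u_mono: "mono_on {0<..} (\<lambda>t. t * u t)"
    and u_antimono: "antimono_on {0<..} (\<lambda>t. u t / t)"
    and st: "s > 0" "t > 0" "\<alpha> \<ge> 1" "s \<le> \<alpha> * t" "t \<le> \<alpha> * s"
  shows "u s \<le> \<alpha> * u t"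
proof (cases "s \<le> t")
  case True
  have "s * u s \<le> t * u t" using mono_onD[OF u_mono, of s t] st True by auto
  then have "u s \<le> (t / s) * u t" using st by (simp add: field_simps)
  also have "\<dots> \<le> \<alpha> * u t" using st u_pos by (intro mult_right_mono) (auto simp: divide_le_eq mult.commute)
  finally show ?thesis .
next
  case False
  have "u s / s \<le> u t / t" using monotone_onD[OF u_antimono, of t s] st False by auto
  then have "u s \<le> (s / t) * u t" using st by (simp add: field_simps)
  also have "\<dots> \<le> \<alpha> * u t" using st u_pos by (intro mult_right_mono) (auto simp: divide_le_eq mult.commute)
  finally show ?thesis .
qed

definition crs :: "real^'p \<Rightarrow> real^'p \<Rightarrow> real^'p^'p" where
  "crs m v = (\<chi> a b. v$a * m$b + m$a * v$b)"

lemma linear_crs: "linear (crs m)"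
  by (rule linearI) (simp_all add: crs_def vec_eq_iff algebra_simps)

lemma outer_expand:
  "outer (k *\<^sub>R (s *\<^sub>R v + m)) = (k * k * s * s) *\<^sub>R outer v + (k * k * s) *\<^sub>R crs m v + (k * k) *\<^sub>R outer m"
  by (simp add: outer_def crs_def vec_eq_iff algebra_simps)

theorem proposition6:
  fixes M :: "'w measure"
    and z :: "'n::finite \<Rightarrow> 'w \<Rightarrow> real^'p::finite"
    and \<tau> :: "'n \<Rightarrow> real"
    and m :: "real^'p"
    and u :: "real \<Rightarrow> real"
    and \<gamma> :: real
  assumes "prob_space M"
    and gamma: "\<gamma> > 0"
    and u_pos: "\<forall>t>0. u t > 0"
    and u_bdd: "\<exists>u_inf. \<forall>t>0. u t \<le> u_inf"
    and u_mono: "mono_on {0<..} (\<lambda>t. t * u t)"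
    and u_antimono: "antimono_on {0<..} (\<lambda>t. u t / t)"
    and indep: "prob_space.indep_vars M (\<lambda>_. borel) z UNIV"
    and z_int: "\<And>i. integrable M (z i)"
    and z_centered: "\<And>i. integral\<^sup>L M (z i) = 0"
    and z_int2: "\<And>i. integrable M (\<lambda>w. outer (z i w))"
    and trC: "(INF i. trace (integral\<^sup>L M (\<lambda>w. outer (z i w))) / real CARD('n)) > 0"
    and tau_pos: "\<forall>i. \<tau> i > 0"
  shows "let Cbar = (\<lambda>i. integral\<^sup>L M (\<lambda>w. outer ((1 / sqrt (max (\<tau> i) 1)) *\<^sub>R
                          (sqrt (\<tau> i) *\<^sub>R z i w + m))))
         in \<exists>!D. posdiag D \<and>
              D = (\<chi> i. Lambda \<gamma> Cbar (utau u \<tau> D) $ i /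
                        (1 + utau u \<tau> D $ i * Lambda \<gamma> Cbar (utau u \<tau> D) $ i))"
proof -
  interpret P: prob_space M by (rule assms(1))
  define k where "k i = 1 / sqrt (max (\<tau> i) 1)" for i
  define s where "s i = sqrt (\<tau> i)" for i
  define w where "w i x = k i *\<^sub>R (s i *\<^sub>R z i x + m)" for i x
  have kpos: "k i > 0" for i by (simp add: k_def)
  have spos: "s i > 0" for i using tau_pos by (simp add: s_def)
  have wint: "integrable M (\<lambda>x. outer (w i x))" for i
    unfolding w_def outer_expand
    using z_int2[of i] integrable_bounded_linear[OF linear_conv_bounded_linear[THEN iffD1, OF linear_crs] z_int[of i]]
    by auto
  have zz_int: "integrable M (\<lambda>x. z i x \<bullet> z i x)" for i
    using integrable_bounded_linear[OF linear_conv_bounded_linear[THEN iffD1, OF linear_trace] z_int2[of i]] by (simp add: trace_outer1)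
  have trz: "trace (integral\<^sup>L M (\<lambda>x. outer (z i x))) = (\<integral>x. z i x \<bullet> z i x \<partial>M)" for i
    using integral_bounded_linear[OF linear_conv_bounded_linear[THEN iffD1, OF linear_trace] z_int2[of i]] by (simp add: trace_outer1)
  have trpos: "(\<integral>x. z i x \<bullet> z i x \<partial>M) > 0" for i
  proof -
    have "(INF i. trace (integral\<^sup>L M (\<lambda>w. outer (z i w))) / real CARD('n))
        \<le> trace (integral\<^sup>L M (\<lambda>w. outer (z i w))) / real CARD('n)"
      by (rule cINF_lower) (simp_all add: bdd_below_finite)
    with trC have "trace (integral\<^sup>L M (\<lambda>w. outer (z i w))) / real CARD('n) > 0" by linarith
    then show ?thesis using trz by (simp add: zero_less_divide_iff)
  qed
  have zm_int: "integrable M (\<lambda>x. z i x \<bullet> m)" for i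
    using z_int[of i] by auto
  have zm0: "(\<integral>x. z i x \<bullet> m \<partial>M) = 0" for i
    using z_centered[of i] z_int[of i] by simp
  have ww: "w i x \<bullet> w i x = (k i * k i * s i * s i) * (z i x \<bullet> z i x)
      + (2 * k i * k i * s i) * (z i x \<bullet> m) + (k i * k i) * (m \<bullet> m)" for i x
    unfolding w_def by (simp add: inner_add_left inner_add_right inner_commute algebra_simps)
  have wpos: "(\<integral>x. w i x \<bullet> w i x \<partial>M) > 0" for i
  proof -
    have "(\<integral>x. w i x \<bullet> w i x \<partial>M) = (k i * k i * s i * s i) * (\<integral>x. z i x \<bullet> z i x \<partial>M)
        + (2 * k i * k i * s i) * (\<integral>x. z i x \<bullet> m \<partial>M) + (k i * k i) * (m \<bullet> m)"
      unfolding ww using zz_int[of i] zm_int[of i] by (simp add: P.prob_space)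
    also have "\<dots> > 0" unfolding zm0 using kpos[of i] spos[of i] trpos[of i]
      by (intro add_pos_nonneg) auto
    finally show ?thesis .
  qed
  interpret L: lam M w \<gamma> using gamma wint wpos by unfold_locales auto
  obtain u_inf where ui: "\<forall>t>0. u t \<le> u_inf" using u_bdd by blast
  have ui0: "u_inf \<ge> 0" using ui u_pos by (meson less_imp_le order_trans zero_less_one)
  define U where "U = (\<Sum>i\<in>UNIV. max (\<tau> i) 1) * u_inf"
  interpret O: outerfp M w \<gamma> "utau u \<tau>" U
  proof (unfold_locales)
    fix D :: "real^'n" assume D: "posdiag D"
    show "posdiag (utau u \<tau> D)" using D u_pos by (simp add: posdiag_def utau_def)
    fix i
    have m1: "max (\<tau> i) 1 \<le> (\<Sum>i\<in>UNIV. max (\<tau> i) 1)" by (intro member_le_sum) auto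
    have m2: "u (max (\<tau> i) 1 * D$i) \<le> u_inf" using ui D by (simp add: posdiag_def)
    have s0: "0 \<le> (\<Sum>i\<in>UNIV. max (\<tau> i) 1)" by (intro sum_nonneg) auto
    have u0: "0 \<le> u (max (\<tau> i) 1 * D$i)" using u_pos D by (simp add: posdiag_def less_imp_le)
    show "utau u \<tau> D $ i \<le> U" unfolding utau_def vec_lambda_beta U_def
      by (rule mult_mono[OF m1 m2 s0 u0])
  next
    fix D D' :: "real^'n" and \<alpha> :: real and i
    assume D: "posdiag D" "posdiag D'" and al: "\<alpha> \<ge> 1"
      and r: "\<forall>i. D$i \<le> \<alpha> * D'$i \<and> D'$i \<le> \<alpha> * D$i"
    define t where "t = max (\<tau> i) 1"
    have t: "t \<ge> 1" by (simp add: t_def)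
    have "u (t * D$i) \<le> \<alpha> * u (t * D'$i)"
      using D t r al by (intro u_lip[OF u_pos u_mono u_antimono]) (auto simp: posdiag_def mult_left_mono)
    then have "t * u (t * D$i) \<le> t * (\<alpha> * u (t * D'$i))" using t by (intro mult_left_mono) auto
    then show "utau u \<tau> D $ i \<le> \<alpha> * utau u \<tau> D' $ i"
      unfolding utau_def vec_lambda_beta t_def[symmetric] by (simp add: mult.left_commute)
  qed
  have Seq: "(\<lambda>i. integral\<^sup>L M (\<lambda>w. outer ((1 / sqrt (max (\<tau> i) 1)) *\<^sub>R
                          (sqrt (\<tau> i) *\<^sub>R z i w + m)))) = L.S"
    by (rule ext) (simp add: L.S_def w_def k_def s_def)
  show ?thesis unfolding Let_def Seq by (rule O.G_ex1)
qed


end
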